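(* Let $t>0$, $\kappa\in(-1,1)$ and set $\Phi_{\kappa,t}:=\alpha\circ\phi_{\kappa,t}$. Then $\Phi_{\kappa,t}$ is invertible in a neighborhood of $z=1$ (with $\Phi_{\kappa,t}(1)=0$), and its inverse is given near the origin by $$\Phi_{\kappa,t}^{-1}(z)=1+\sum_{n\geq1}\frac{(-1)^n}{n}\left\{\sum_{k=1}^n(-1)^k\frac{2n}{n+k}\binom{n+k}{n-k}\,b_k(\kappa,t)\right\}z^n,$$ where $b_k(\kappa,t):=k\,2^{2k}a_k(\kappa,t)$ for $k\ge1$.
   Context: Let $\alpha(z):=\frac{1-\sqrt{1-z}}{1+\sqrt{1-z}}$ (principal branch), a bijection of $\mathbb{C}\setminus[1,\infty)$ onto the open unit disc $\mathbb{D}$ with inverse $\alpha^{-1}(z)=\frac{4z}{(1+z)^2}$. For $t>0$ let $\xi_{2t}(z):=\frac{z-1}{z+1}e^{tz}$. Define $\phi_{\kappa,t}(z):=\frac{z^2}{z^2-\kappa^2}\,\alpha^{-1}(\xi_{2t}(z))$ near $z=1$; it is locally invertible near $z=1$ with $\phi_{\kappa,t}(1)=0$, and $a_n(\kappa,t):=\frac{1}{n!}\partial_z^{n-1}\left[\frac{z-1}{\phi_{\kappa,t}(z)}\right]^n\big|_{z=1}$ ($n\geq1$) are the Taylor coefficients of its local inverse: $\phi_{\kappa,t}^{-1}(u)=1+\sum_{n\ge1}a_n(\kappa,t)u^n$. *)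

theory Defs
  imports "HOL-Analysis.Analysis"
begin

definition alpha :: "complex \<Rightarrow> complex" where
  "alpha z = (1 - csqrt (1 - z)) / (1 + csqrt (1 - z))"

definition alpha_inv :: "complex \<Rightarrow> complex" where
  "alpha_inv z = 4 * z / (1 + z)^2"

definition xi2 :: "real \<Rightarrow> complex \<Rightarrow> complex" where
  "xi2 t z = (z - 1) / (z + 1) * exp (of_real t * z)"

definition phi :: "real \<Rightarrow> real \<Rightarrow> complex \<Rightarrow> complex" where
  "phi \<kappa> t z = z^2 / (z^2 - (of_real \<kappa>)^2) * alpha_inv (xi2 t z)"

definition Phi :: "real \<Rightarrow> real \<Rightarrow> complex \<Rightarrow> complex" where
  "Phi \<kappa> t = alpha \<circ> phi \<kappa> t"

text \<open>The function (z-1)/phi(z), with its removable singularity at z = 1 filled in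
  by the limiting value 1/phi'(1).\<close>
definition phi_quot :: "real \<Rightarrow> real \<Rightarrow> complex \<Rightarrow> complex" where
  "phi_quot \<kappa> t z = (if z = 1 then 1 / deriv (phi \<kappa> t) 1 else (z - 1) / phi \<kappa> t z)"

definition a_coef :: "real \<Rightarrow> real \<Rightarrow> nat \<Rightarrow> complex" where
  "a_coef \<kappa> t n = (deriv ^^ (n - 1)) (\<lambda>z. (phi_quot \<kappa> t z)^n) 1 / fact n"

definition b_coef :: "real \<Rightarrow> real \<Rightarrow> nat \<Rightarrow> complex" where
  "b_coef \<kappa> t k = of_nat k * 2^(2*k) * a_coef \<kappa> t k"

definition c_coef :: "real \<Rightarrow> real \<Rightarrow> nat \<Rightarrow> complex" where
  "c_coef \<kappa> t n = (-1)^n / of_nat n *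
     (\<Sum>k=1..n. (-1)^k * (2 * of_nat n / of_nat (n + k)) * of_nat ((n + k) choose (n - k))
                 * b_coef \<kappa> t k)"

end

theory Submission
  imports Defs "HOL-Complex_Analysis.Complex_Analysis"
begin



lemma inv_integral:
  fixes F :: "complex \<Rightarrow> complex"
  assumes holF: "F holomorphic_on ball c R" and inj: "inj_on F (ball c R)"
    and r: "0 < \<rho>" "\<rho> < R" and w0: "w0 \<in> ball c \<rho>"
  shows "((\<lambda>w. w * deriv F w / (F w - F w0)) has_contour_integral (2*pi*\<i>*w0)) (circlepath c \<rho>)"
proof -
  define Q where "Q = (\<lambda>w. if w = w0 then deriv F w0 else (F w - F w0)/(w - w0))"
  have w0R: "w0 \<in> ball c R" using w0 r by auto
  have holQ: "Q holomorphic_on ball c R"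
    unfolding Q_def by (rule pole_lemma[OF holF]) (use w0R in simp)
  have Qnz: "Q w \<noteq> 0" if "w \<in> ball c R" for w
  proof (cases "w = w0")
    case True then show ?thesis
      using holomorphic_injective_imp_regular[OF holF open_ball inj w0R] by (simp add: Q_def)
  next
    case False
    then have "F w \<noteq> F w0" using inj that w0R by (auto simp: inj_on_def)
    then show ?thesis using False by (simp add: Q_def)
  qed
  have sub: "cball c \<rho> \<subseteq> ball c R" using r by auto
  have holdF: "deriv F holomorphic_on ball c R" by (rule holomorphic_deriv[OF holF open_ball])
  have hol: "(\<lambda>w. w * deriv F w / Q w) holomorphic_on cball c \<rho>"
    by (rule holomorphic_on_subset[OF _ sub]) (intro holomorphic_intros holdF holQ, use Qnz in auto)
  have "((\<lambda>u. (u * deriv F u / Q u)/(u - w0)) has_contour_integral (2*pi*\<i>*(w0 * deriv F w0 / Q w0))) (circlepath c \<rho>)"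
    using Cauchy_integral_circlepath_simple[OF hol, of w0] w0 by (simp add: dist_norm norm_minus_commute)
  moreover have "w0 * deriv F w0 / Q w0 = w0"
    using Qnz[OF w0R] by (simp add: Q_def)
  ultimately have I: "((\<lambda>u. (u * deriv F u / Q u)/(u - w0)) has_contour_integral (2*pi*\<i>*w0)) (circlepath c \<rho>)"
    by simp
  show ?thesis
  proof (rule has_contour_integral_eq[OF I])
    fix u assume "u \<in> path_image (circlepath c \<rho>)"
    then have u: "u \<in> sphere c \<rho>" using r by (simp add: path_image_circlepath_nonneg)
    then have uw: "u \<noteq> w0" using w0 by auto
    have uR: "u \<in> ball c R" using u r by auto
    have "F u \<noteq> F w0" using inj uR w0R uw by (auto simp: inj_on_def)
    then show "u * deriv F u / Q u / (u - w0) = u * deriv F u / (F u - F w0)"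
    proof -
      have a: "F u - F w0 \<noteq> 0" "u - w0 \<noteq> 0" using \<open>F u \<noteq> F w0\<close> uw by auto
      have "u * deriv F u / Q u / (u - w0) = u * deriv F u * (u - w0) / (F u - F w0) / (u - w0)"
        using uw by (simp add: Q_def)
      also have "\<dots> = u * deriv F u / (F u - F w0)" using a by simp
      finally show ?thesis .
    qed
  qed
qed

lemma by_parts:
  fixes F :: "complex \<Rightarrow> complex"
  assumes holF: "F holomorphic_on ball c R" and inj: "inj_on F (ball c R)"
    and r: "0 < \<rho>" "\<rho> < R" and F0: "F c = 0" and n: "n \<ge> 1"
  shows "contour_integral (circlepath c \<rho>) (\<lambda>w. w * deriv F w / F w ^ Suc n)
       = contour_integral (circlepath c \<rho>) (\<lambda>w. 1 / F w ^ n) / of_nat n"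
proof -
  define S where "S = ball c R - {c}"
  have Fnz: "F w \<noteq> 0" if "w \<in> S" for w
    using inj that F0 r by (auto simp: S_def inj_on_def)
  have oS: "open S" by (simp add: S_def open_Diff)
  have holdF: "deriv F holomorphic_on ball c R" by (rule holomorphic_deriv[OF holF open_ball])
  have der: "((\<lambda>w. w / F w ^ n) has_field_derivative (1 / F w ^ n - of_nat n * (w * deriv F w / F w ^ Suc n))) (at w within S)"
    if "w \<in> S" for w
  proof -
    have wR: "w \<in> ball c R" using that by (simp add: S_def)
    have dF: "(F has_field_derivative deriv F w) (at w)"
      using holF wR by (meson holomorphic_derivI open_ball)
    have "((\<lambda>w. w / F w ^ n) has_field_derivative
           ((1 * F w ^ n - w * (of_nat n * F w ^ (n - 1) * deriv F w)) / (F w ^ n * F w ^ n))) (at w)"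
      using Fnz[OF that] by (auto intro!: derivative_eq_intros dF)
    moreover have "(1 * F w ^ n - w * (of_nat n * F w ^ (n - 1) * deriv F w)) / (F w ^ n * F w ^ n)
        = 1 / F w ^ n - of_nat n * (w * deriv F w / F w ^ Suc n)"
      using Fnz[OF that] n by (cases n) (auto simp: field_simps)
    ultimately show ?thesis by (simp add: has_field_derivative_at_within)
  qed
  have SR: "S \<subseteq> ball c R" by (auto simp: S_def)
  have cF: "continuous_on S F"
    by (rule continuous_on_subset[OF holomorphic_on_imp_continuous_on[OF holF] SR])
  have cdF: "continuous_on S (deriv F)"
    by (rule continuous_on_subset[OF holomorphic_on_imp_continuous_on[OF holdF] SR])
  have pimg: "path_image (circlepath c \<rho>) \<subseteq> S"
    using r by (auto simp: S_def path_image_circlepath_nonneg)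
  have "((\<lambda>w. 1 / F w ^ n - of_nat n * (w * deriv F w / F w ^ Suc n)) has_contour_integral 0) (circlepath c \<rho>)"
    using contour_integral_primitive[OF der _ pimg] by simp
  moreover have cont1: "(\<lambda>w. 1 / F w ^ n) contour_integrable_on circlepath c \<rho>"
    apply (rule contour_integrable_continuous_circlepath)
    apply (rule continuous_on_subset[OF _ pimg])
    by (intro continuous_intros cF cdF) (use Fnz in auto)
  moreover have cont2: "(\<lambda>w. w * deriv F w / F w ^ Suc n) contour_integrable_on circlepath c \<rho>"
    apply (rule contour_integrable_continuous_circlepath)
    apply (rule continuous_on_subset[OF _ pimg])
    by (intro continuous_intros cF cdF) (use Fnz in auto)
  ultimately have I0: "((\<lambda>w. 1 / F w ^ n - of_nat n * (w * deriv F w / F w ^ Suc n)) has_contour_integral 0) (circlepath c \<rho>)"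
    by blast
  have "contour_integral (circlepath c \<rho>) (\<lambda>w. 1 / F w ^ n - of_nat n * (w * deriv F w / F w ^ Suc n))
      = contour_integral (circlepath c \<rho>) (\<lambda>w. 1 / F w ^ n)
       - contour_integral (circlepath c \<rho>) (\<lambda>w. of_nat n * (w * deriv F w / F w ^ Suc n))"
    by (rule contour_integral_diff[OF cont1 contour_integrable_lmul[OF cont2]])
  also have "contour_integral (circlepath c \<rho>) (\<lambda>w. of_nat n * (w * deriv F w / F w ^ Suc n))
     = of_nat n * contour_integral (circlepath c \<rho>) (\<lambda>w. w * deriv F w / F w ^ Suc n)"
    by (rule contour_integral_lmul[OF cont2])
  finally have "contour_integral (circlepath c \<rho>) (\<lambda>w. 1 / F w ^ n)
      - of_nat n * contour_integral (circlepath c \<rho>) (\<lambda>w. w * deriv F w / F w ^ Suc n) = 0"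
    using contour_integral_unique[OF I0] by simp
  then show ?thesis using n by (simp add: field_simps)
qed




lemma inv_series:
  fixes F :: "complex \<Rightarrow> complex"
  assumes holF: "F holomorphic_on ball c R" and inj: "inj_on F (ball c R)"
    and r: "0 < \<rho>" "\<rho> < R" and w0: "w0 \<in> ball c \<rho>"
    and m: "m > 0" and mF: "\<And>w. w \<in> sphere c \<rho> \<Longrightarrow> m \<le> norm (F w)"
    and z: "norm (F w0) < m"
  shows "(\<lambda>n. F w0 ^ n * contour_integral (circlepath c \<rho>) (\<lambda>w. w * deriv F w / F w ^ Suc n)) sums (2*pi*\<i>*w0)"
proof -
  define z where "z = F w0"
  define f where "f = (\<lambda>n w. z ^ n * (w * deriv F w / F w ^ Suc n))"
  have holdF: "deriv F holomorphic_on ball c R" by (rule holomorphic_deriv[OF holF open_ball])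
  have SR: "sphere c \<rho> \<subseteq> ball c R" using r by auto
  have cF: "continuous_on (sphere c \<rho>) F"
    by (rule continuous_on_subset[OF holomorphic_on_imp_continuous_on[OF holF] SR])
  have cdF: "continuous_on (sphere c \<rho>) (deriv F)"
    by (rule continuous_on_subset[OF holomorphic_on_imp_continuous_on[OF holdF] SR])
  have Fnz: "F w \<noteq> 0" if "w \<in> sphere c \<rho>" for w
    using mF[OF that] m by auto
  have pimg: "path_image (circlepath c \<rho>) = sphere c \<rho>"
    using r by (simp add: path_image_circlepath_nonneg)
  have cG: "continuous_on (sphere c \<rho>) (\<lambda>w. w * deriv F w)"
    by (intro continuous_intros cdF)
  have "bounded ((\<lambda>w. w * deriv F w) ` sphere c \<rho>)"
    by (rule compact_imp_bounded[OF compact_continuous_image[OF cG compact_sphere]])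
  then obtain B where B: "\<And>w. w \<in> sphere c \<rho> \<Longrightarrow> norm (w * deriv F w) \<le> B"
    unfolding bounded_iff by (meson imageI)
  have fint: "f n contour_integrable_on circlepath c \<rho>" for n
    unfolding f_def
    by (rule contour_integrable_continuous_circlepath, unfold pimg)
       (intro continuous_intros cF cdF, use Fnz in auto)
  have bound: "norm (f n w) \<le> B / m * (norm z / m) ^ n" if w: "w \<in> sphere c \<rho>" for n w
  proof -
    have Fm: "m \<le> norm (F w)" by (rule mF[OF w])
    have "norm (f n w) = norm (w * deriv F w) * (norm z / norm (F w)) ^ n / norm (F w)"
      by (simp add: f_def norm_mult norm_divide norm_power power_divide mult_ac)
    also have "\<dots> \<le> B * (norm z / m) ^ n / m"
    proof (rule frac_le)
      have B0: "0 \<le> B" using B[OF w] norm_ge_zero order_trans by blast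
      have d: "norm z / norm (F w) \<le> norm z / m"
        by (rule divide_left_mono) (use m Fm in \<open>auto intro!: mult_pos_pos\<close>)
      show "0 \<le> B * (norm z / m) ^ n" using B0 m by simp
      show "norm (w * deriv F w) * (norm z / norm (F w)) ^ n \<le> B * (norm z / m) ^ n"
        by (rule mult_mono[OF B[OF w] power_mono[OF d]]) (auto simp: B0)
    qed (use m Fm in auto)
    finally show ?thesis by simp
  qed
  have summ: "summable (\<lambda>n. B / m * (norm z / m) ^ n)"
    using z m by (intro summable_mult summable_geometric) (simp add: z_def)
  have ul: "uniform_limit (sphere c \<rho>) (\<lambda>n w. \<Sum>i<n. f i w) (\<lambda>w. \<Sum>i. f i w) sequentially"
    by (rule Weierstrass_m_test[OF bound summ])
  have pw: "(\<lambda>i. f i w) sums (w * deriv F w / (F w - z))" if w: "w \<in> sphere c \<rho>" for w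
  proof -
    have q: "norm (z / F w) < 1"
      using mF[OF w] z m Fnz[OF w] by (simp add: z_def norm_divide divide_less_eq)
    have s1: "(\<lambda>i. w * deriv F w / F w * (z / F w) ^ i) sums (w * deriv F w / F w * (1 / (1 - z / F w)))"
      by (rule sums_mult[OF geometric_sums[OF q]])
    have e1: "w * deriv F w / F w * (1 / (1 - z / F w)) = w * deriv F w / (F w - z)"
    proof -
      have "F w \<noteq> z" using mF[OF w] z by (auto simp: z_def)
      then have "F w - z \<noteq> 0" by simp
      then show ?thesis using Fnz[OF w] by (simp add: field_simps)
    qed
    have e2: "(\<lambda>i. w * deriv F w / F w * (z / F w) ^ i) = (\<lambda>i. f i w)"
      by (rule ext) (simp add: f_def power_divide field_simps)
    show ?thesis using s1 unfolding e1 e2 .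
  qed
  have "((\<lambda>n. contour_integral (circlepath c \<rho>) (\<lambda>w. \<Sum>i<n. f i w)) \<longlongrightarrow>
        contour_integral (circlepath c \<rho>) (\<lambda>w. \<Sum>i. f i w)) sequentially"
    by (rule contour_integral_uniform_limit_circlepath(2)[OF _ ul _ r(1)])
       (intro always_eventually allI contour_integrable_sum finite_lessThan fint, simp)
  moreover have "contour_integral (circlepath c \<rho>) (\<lambda>w. \<Sum>i. f i w)
      = contour_integral (circlepath c \<rho>) (\<lambda>w. w * deriv F w / (F w - z))"
    by (rule contour_integral_eq) (metis pw sums_unique pimg)
  moreover have "\<dots> = 2*pi*\<i>*w0"
    unfolding z_def by (rule contour_integral_unique[OF inv_integral[OF holF inj r w0]])
  moreover have "contour_integral (circlepath c \<rho>) (\<lambda>w. \<Sum>i<n. f i w)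
     = (\<Sum>i<n. z ^ i * contour_integral (circlepath c \<rho>) (\<lambda>w. w * deriv F w / F w ^ Suc i))" for n
  proof -
    have "contour_integral (circlepath c \<rho>) (\<lambda>w. \<Sum>i<n. f i w) = (\<Sum>i<n. contour_integral (circlepath c \<rho>) (f i))"
      by (rule contour_integral_sum) (auto intro: fint)
    also have "\<dots> = (\<Sum>i<n. z ^ i * contour_integral (circlepath c \<rho>) (\<lambda>w. w * deriv F w / F w ^ Suc i))"
    proof (rule sum.cong[OF refl])
      fix i
      have "(\<lambda>w. w * deriv F w / F w ^ Suc i) contour_integrable_on circlepath c \<rho>"
        by (rule contour_integrable_continuous_circlepath, unfold pimg)
           (intro continuous_intros cF cdF, use Fnz in auto)
      then show "contour_integral (circlepath c \<rho>) (f i) = z ^ i * contour_integral (circlepath c \<rho>) (\<lambda>w. w * deriv F w / F w ^ Suc i)"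
        unfolding f_def by (rule contour_integral_lmul)
    qed
    finally show ?thesis .
  qed
  ultimately show ?thesis
    unfolding sums_def z_def by simp
qed




definition Acf :: "nat \<Rightarrow> nat \<Rightarrow> complex" where
  "Acf n k = (-1)^(n+k) * of_nat ((n+k) choose (2*k))"

definition Vp :: "nat \<Rightarrow> complex \<Rightarrow> complex" where
  "Vp n y = (\<Sum>k\<le>n. Acf n k * y^k)"

lemma Acf_zero: "k > n \<Longrightarrow> Acf n k = 0"
  by (simp add: Acf_def)

lemma Vp_ext: "N \<ge> n \<Longrightarrow> (\<Sum>k\<le>N. Acf n k * y^k) = Vp n y"
  unfolding Vp_def
  by (rule sum.mono_neutral_right) (auto simp: Acf_zero)

lemma binom_rec: "(Suc (Suc m) choose Suc (Suc (2*k))) + (m choose Suc (Suc (2*k)))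
   = (m choose (2*k)) + 2 * (Suc m choose Suc (Suc (2*k)))"
  by (simp add: binomial_Suc_Suc)

lemma Acf_rec: "Acf (Suc (Suc n)) (Suc k) = Acf (Suc n) k - 2 * Acf (Suc n) (Suc k) - Acf n (Suc k)"
proof -
  have en: "((Suc (Suc n) + Suc k) choose (2 * Suc k)) + ((n + Suc k) choose (2*Suc k))
     = ((Suc n + k) choose (2*k)) + 2 * ((Suc n + Suc k) choose (2 * Suc k))"
    using binom_rec[of "n+k+1" k] by simp
  have e: "of_nat ((Suc (Suc n) + Suc k) choose (2 * Suc k)) + of_nat ((n + Suc k) choose (2*Suc k))
     = (of_nat ((Suc n + k) choose (2*k)) + 2 * of_nat ((Suc n + Suc k) choose (2 * Suc k)) :: complex)"
    using arg_cong[OF en, of "of_nat :: nat \<Rightarrow> complex"] by simp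
  define s :: complex where "s = (-1)^(n+k+1)"
  have p: "(-1::complex)^(Suc (Suc n) + Suc k) = s" "(-1::complex)^(Suc n + k) = s"
     "(-1::complex)^(Suc n + Suc k) = -s" "(-1::complex)^(n + Suc k) = s"
    by (simp_all add: s_def)
  show ?thesis
    unfolding Acf_def p using e
    by (simp add: algebra_simps)
qed

lemma Acf_rec0: "Acf (Suc (Suc n)) 0 + 2 * Acf (Suc n) 0 + Acf n 0 = 0"
  by (simp add: Acf_def)

lemma Vp_rec: "Vp (Suc (Suc n)) y = (y - 2) * Vp (Suc n) y - Vp n y"
proof -
  have "Vp (Suc (Suc n)) y = Acf (Suc (Suc n)) 0 + (\<Sum>k\<le>Suc n. Acf (Suc (Suc n)) (Suc k) * y^Suc k)"
    unfolding Vp_def by (subst sum.atMost_Suc_shift) simp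
  also have "(\<Sum>k\<le>Suc n. Acf (Suc (Suc n)) (Suc k) * y^Suc k)
     = (\<Sum>k\<le>Suc n. Acf (Suc n) k * y^Suc k - 2 * (Acf (Suc n) (Suc k) * y^Suc k) - Acf n (Suc k) * y^Suc k)"
    by (rule sum.cong[OF refl]) (simp add: Acf_rec algebra_simps)
  also have "\<dots> = (\<Sum>k\<le>Suc n. Acf (Suc n) k * y^Suc k) - 2 * (\<Sum>k\<le>Suc n. Acf (Suc n) (Suc k) * y^Suc k)
        - (\<Sum>k\<le>Suc n. Acf n (Suc k) * y^Suc k)"
    by (simp add: sum_subtractf sum_distrib_left)
  also have "(\<Sum>k\<le>Suc n. Acf (Suc n) k * y^Suc k) = y * Vp (Suc n) y"
    unfolding Vp_def sum_distrib_left by (intro sum.cong refl) (simp add: mult_ac)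
  also have "(\<Sum>k\<le>Suc n. Acf (Suc n) (Suc k) * y^Suc k) = Vp (Suc n) y - Acf (Suc n) 0"
  proof -
    have "Vp (Suc n) y = (\<Sum>k\<le>Suc (Suc n). Acf (Suc n) k * y^k)" by (rule Vp_ext[symmetric]) simp
    also have "\<dots> = Acf (Suc n) 0 + (\<Sum>k\<le>Suc n. Acf (Suc n) (Suc k) * y^Suc k)"
      by (subst sum.atMost_Suc_shift) simp
    finally show ?thesis by simp
  qed
  also have "(\<Sum>k\<le>Suc n. Acf n (Suc k) * y^Suc k) = Vp n y - Acf n 0"
  proof -
    have "Vp n y = (\<Sum>k\<le>Suc (Suc n). Acf n k * y^k)" by (rule Vp_ext[symmetric]) simp
    also have "\<dots> = Acf n 0 + (\<Sum>k\<le>Suc n. Acf n (Suc k) * y^Suc k)"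
      by (subst sum.atMost_Suc_shift) simp
    finally show ?thesis by simp
  qed
  finally show ?thesis using Acf_rec0[of n] by (simp add: algebra_simps)
qed

lemma Vp_geom:
  assumes x: "x \<noteq> 0" and y: "y = (1 + x)^2 / x"
  shows "x^n * Vp n y = (\<Sum>j<2*n+1. x^j)"
proof -
  have yx: "x * y = (1 + x)^2" using x y by simp
  have "x^n * Vp n y = (\<Sum>j<2*n+1. x^j) \<and> x^Suc n * Vp (Suc n) y = (\<Sum>j<2*Suc n+1. x^j)"
  proof (induction n)
    case 0
    have "x * (y - 1) = 1 + x + x^2" using yx by (simp add: algebra_simps power2_eq_square)
    then show ?case by (simp add: Vp_def Acf_def eval_nat_numeral algebra_simps)
  next
    case (Suc n)
    then have h1: "x^n * Vp n y = (\<Sum>j<2*n+1. x^j)" and h2: "x^Suc n * Vp (Suc n) y = (\<Sum>j<2*Suc n+1. x^j)"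
      by blast+
    have xy2: "x * (y - 2) = 1 + x^2" using yx by (simp add: algebra_simps power2_eq_square)
    have s1: "(\<Sum>j<2*Suc n+1. x^j) = (\<Sum>j<2*n+1. x^j) + x^(2*n+1) + x^(2*n+2)"
      by (simp add: eval_nat_numeral)
    have s2: "(\<Sum>j<2*Suc (Suc n)+1. x^j) = (\<Sum>j<2*Suc n+1. x^j) + x^(2*n+3) + x^(2*n+4)"
      by (simp add: eval_nat_numeral)
    have "x^Suc (Suc n) * Vp (Suc (Suc n)) y = (x * (y - 2)) * (x^Suc n * Vp (Suc n) y) - x^2 * (x^n * Vp n y)"
      by (simp add: Vp_rec algebra_simps power2_eq_square)
    also have "\<dots> = (1 + x^2) * (\<Sum>j<2*Suc n+1. x^j) - x^2 * (\<Sum>j<2*n+1. x^j)"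
      unfolding xy2 h1 h2 ..
    also have "\<dots> = (\<Sum>j<2*Suc (Suc n)+1. x^j)"
      unfolding s2 s1 by (simp add: algebra_simps power2_eq_square eval_nat_numeral)
    finally show ?case using h2 by simp
  qed
  then show ?thesis by blast
qed

lemma inv_pow_expand:
  assumes x: "x \<noteq> 0" and y: "y = (1 + x)^2 / x" and n: "n \<ge> 1"
  shows "1 / x^n = Vp n y - Vp (n - 1) y - x^n"
proof -
  obtain m where m: "n = Suc m" using n by (cases n) auto
  have a: "x^Suc m * Vp (Suc m) y = (\<Sum>j<2*Suc m+1. x^j)" by (rule Vp_geom[OF x y])
  have b: "x^m * Vp m y = (\<Sum>j<2*m+1. x^j)" by (rule Vp_geom[OF x y])
  have "x^Suc m * (Vp (Suc m) y - Vp m y) = (\<Sum>j<2*Suc m+1. x^j) - x * (\<Sum>j<2*m+1. x^j)"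
    using a b by (simp add: algebra_simps)
  also have "\<dots> = 1 + x^(2 * Suc m)"
  proof -
    have "(\<Sum>j<2*Suc m+1. x^j) = (\<Sum>j<Suc (2*m+2). x^j)" by simp
    also have "\<dots> = 1 + (\<Sum>j<2*m+2. x^Suc j)" by (subst sum.lessThan_Suc_shift) simp
    also have "\<dots> = 1 + (\<Sum>j<2*m+1. x^Suc j) + x^(2*m+2)" by (simp add: eval_nat_numeral)
    also have "(\<Sum>j<2*m+1. x^Suc j) = x * (\<Sum>j<2*m+1. x^j)" by (simp only: sum_distrib_left power_Suc)
    finally show ?thesis by simp
  qed
  finally have "x^Suc m * (Vp (Suc m) y - Vp m y) = 1 + x^(2 * Suc m)" .
  moreover have "x^(2 * Suc m) = x^Suc m * x^Suc m" by (simp only: mult_2 power_add)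
  ultimately have E: "x^Suc m * (Vp (Suc m) y - Vp m y) = 1 + x^Suc m * x^Suc m" by simp
  have xn: "x^Suc m \<noteq> 0" using x by simp
  have "Vp (Suc m) y - Vp m y = (1 + x^Suc m * x^Suc m) / x^Suc m"
    using E xn by (simp add: eq_divide_eq mult.commute)
  also have "\<dots> = 1 / x^Suc m + x^Suc m" using xn by (simp add: add_divide_distrib)
  finally show ?thesis unfolding m by simp
qed




definition qf :: "real \<Rightarrow> real \<Rightarrow> complex \<Rightarrow> complex" where
  "qf \<kappa> t z = z^2 / (z^2 - (of_real \<kappa>)^2) * (4 * (exp (of_real t * z) / (z + 1)) / (1 + xi2 t z)^2)"

lemma phi_fact: "phi \<kappa> t z = (z - 1) * qf \<kappa> t z"
  by (simp add: phi_def qf_def alpha_inv_def xi2_def divide_inverse mult_ac)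

lemma alpha_inv_alpha: "alpha_inv (alpha u) = u"
proof -
  define s where "s = csqrt (1 - u)"
  have s2: "s^2 = 1 - u" by (simp add: s_def)
  have "Re s \<ge> 0" unfolding s_def by (rule Re_csqrt)
  then have "Re (1 + s) > 0" by simp
  then have s1: "1 + s \<noteq> 0" by (metis less_irrefl zero_complex.sel(1))
  have "alpha_inv (alpha u) = 4 * ((1 - s) / (1 + s)) / (1 + (1 - s) / (1 + s))^2"
    by (simp add: alpha_def alpha_inv_def s_def)
  also have "1 + (1 - s) / (1 + s) = 2 / (1 + s)" using s1 by (simp add: field_simps)
  also have "4 * ((1 - s) / (1 + s)) / (2 / (1 + s))^2 = (1 - s) * (1 + s)"
  proof -
    have "(2 / (1 + s))^2 = 4 / (1 + s)^2" by (simp add: power_divide)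
    moreover have "4 * ((1 - s) / (1 + s)) / (4 / (1 + s)^2) = ((1 - s) / (1 + s)) * (1 + s)^2"
    proof -
      have g: "\<And>x c::complex. c \<noteq> 0 \<Longrightarrow> 4 * x / (4 / c) = x * c" by (simp add: field_simps)
      show ?thesis by (rule g) (use s1 in simp)
    qed
    moreover have "((1 - s) / (1 + s)) * (1 + s)^2 = (1 - s) * (1 + s)"
      using s1 by (simp add: power2_eq_square)
    ultimately show ?thesis by simp
  qed
  also have "\<dots> = u" using s2 by (simp add: algebra_simps power2_eq_square)
  finally show ?thesis .
qed

lemma one_plus_alpha: "1 + alpha u \<noteq> 0"
proof -
  define s where "s = csqrt (1 - u)"
  have "Re s \<ge> 0" unfolding s_def by (rule Re_csqrt)
  then have "Re (1 + s) > 0" by simp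
  then have s1: "1 + s \<noteq> 0" by (metis less_irrefl zero_complex.sel(1))
  have "1 + alpha u = 2 / (1 + s)"
    using s1 by (simp add: alpha_def s_def[symmetric] field_simps)
  then show ?thesis using s1 by simp
qed

lemma phi_alpha: "phi \<kappa> t z = alpha_inv (Phi \<kappa> t z)"
  by (simp add: Phi_def alpha_inv_alpha)

lemma ev_ne:
  fixes f :: "complex \<Rightarrow> complex"
  assumes "isCont f a" "f a \<noteq> c" shows "eventually (\<lambda>z. f z \<noteq> c) (nhds a)"
proof -
  have "(f \<longlongrightarrow> f a) (nhds a)" using assms(1) by (simp add: isCont_def tendsto_at_iff_tendsto_nhds)
  then show ?thesis by (rule tendsto_imp_eventually_ne) (rule assms(2))
qed

lemma ev_norm:
  fixes f :: "complex \<Rightarrow> complex"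
  assumes "isCont f a" "norm (f a) < e" shows "eventually (\<lambda>z. norm (f z) < e) (nhds a)"
proof -
  have "(f \<longlongrightarrow> f a) (nhds a)" using assms(1) by (simp add: isCont_def tendsto_at_iff_tendsto_nhds)
  then have "((\<lambda>z. norm (f z)) \<longlongrightarrow> norm (f a)) (nhds a)" by (rule tendsto_norm)
  then show ?thesis by (rule order_tendstoD(2)) (rule assms(2))
qed

lemma nbhd:
  assumes k: "-1 < \<kappa>" "\<kappa> < 1"
  obtains \<delta> where "\<delta> > 0" "\<And>z. z \<in> ball 1 \<delta> \<Longrightarrow> z + 1 \<noteq> 0 \<and> z^2 - (of_real \<kappa>)^2 \<noteq> 0 \<and> 1 + xi2 t z \<noteq> 0
      \<and> qf \<kappa> t z \<noteq> 0 \<and> norm (phi \<kappa> t z) < 1"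
proof -
  have k2: "(of_real \<kappa> :: complex)^2 \<noteq> 1"
  proof
    assume "(of_real \<kappa> :: complex)^2 = 1"
    then have "of_real (\<kappa>^2) = (1::complex)" by simp
    then have "\<kappa>^2 = 1" using of_real_eq_1_iff by blast
    moreover have "\<kappa>^2 < 1" using k by (simp add: abs_square_less_1)
    ultimately show False by simp
  qed
  have xi1: "xi2 t 1 = 0" by (simp add: xi2_def)
  have q1: "qf \<kappa> t 1 \<noteq> 0" using k2 by (simp add: qf_def xi1)
  have c1: "isCont (\<lambda>z::complex. z + 1) 1" by (intro continuous_intros)
  have c2: "isCont (\<lambda>z::complex. z^2 - (of_real \<kappa>)^2) 1" by (intro continuous_intros)
  have c3: "isCont (\<lambda>z. 1 + xi2 t z) 1" unfolding xi2_def by (intro continuous_intros) auto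
  have c4: "isCont (qf \<kappa> t) 1" unfolding qf_def xi2_def using k2 by (intro continuous_intros) auto
  have c5: "isCont (phi \<kappa> t) 1" unfolding phi_fact[abs_def] qf_def xi2_def using k2 by (intro continuous_intros) auto
  have "eventually (\<lambda>z. z + 1 \<noteq> 0 \<and> z^2 - (of_real \<kappa>)^2 \<noteq> 0 \<and> 1 + xi2 t z \<noteq> 0
      \<and> qf \<kappa> t z \<noteq> 0 \<and> norm (phi \<kappa> t z) < 1) (nhds 1)"
  proof -
    have e1: "eventually (\<lambda>z::complex. z + 1 \<noteq> 0) (nhds 1)" by (rule ev_ne[OF c1]) simp
    have e2: "eventually (\<lambda>z::complex. z^2 - (of_real \<kappa>)^2 \<noteq> 0) (nhds 1)" by (rule ev_ne[OF c2]) (use k2 in simp)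
    have e3: "eventually (\<lambda>z. 1 + xi2 t z \<noteq> 0) (nhds 1)" by (rule ev_ne[OF c3]) (simp add: xi1)
    have e4: "eventually (\<lambda>z. qf \<kappa> t z \<noteq> 0) (nhds 1)" by (rule ev_ne[OF c4]) (rule q1)
    have e5: "eventually (\<lambda>z. norm (phi \<kappa> t z) < 1) (nhds 1)" by (rule ev_norm[OF c5]) (simp add: phi_fact)
    show ?thesis by (intro eventually_conj e1 e2 e3 e4 e5)
  qed
  then obtain d where "d > 0" and d: "\<And>x. dist x 1 < d \<Longrightarrow> x + 1 \<noteq> 0 \<and> x^2 - (of_real \<kappa>)^2 \<noteq> 0 \<and> 1 + xi2 t x \<noteq> 0
      \<and> qf \<kappa> t x \<noteq> 0 \<and> norm (phi \<kappa> t x) < 1"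
    unfolding eventually_nhds_metric by blast
  show ?thesis by (rule that[OF \<open>d > 0\<close>]) (use d in \<open>auto simp: dist_commute\<close>)
qed




lemma Acf_diff:
  assumes "1 \<le> k" "k \<le> n"
  shows "Acf n k - Acf (n - 1) k = (-1)^n * ((-1)^k * (2 * of_nat n / of_nat (n + k)) * of_nat ((n + k) choose (n - k)))"
proof -
  obtain m where m: "n = Suc m" using assms by (cases n) auto
  have sym: "(n + k) choose (n - k) = (n + k) choose (2*k)"
  proof -
    have e: "n + k - (n - k) = 2*k" using assms by simp
    have le: "n - k \<le> n + k" by simp
    show ?thesis using binomial_symmetric[OF le] unfolding e .
  qed
  have abs: "(n - k) * ((n + k) choose (2*k)) = (n + k) * ((n + k - 1) choose (2*k))"
    using binomial_absorb_comp[of "n+k" "2*k"] assms by (simp add: mult_2)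
  then have absC: "of_nat (n - k) * of_nat ((n + k) choose (2*k)) = (of_nat (n + k) * of_nat ((n + k - 1) choose (2*k)) :: complex)"
    by (metis of_nat_mult)
  have nk: "of_nat (n - k) = (of_nat n - of_nat k :: complex)" using assms by (simp add: of_nat_diff)
  have nk0: "n + k \<noteq> 0" using assms by simp
  have pos: "(of_nat (n + k) :: complex) \<noteq> 0" by (metis nk0 of_nat_eq_0_iff)
  have "Acf n k - Acf (n - 1) k = (-1)^(n+k) * (of_nat ((n + k) choose (2*k)) + of_nat ((n + k - 1) choose (2*k)))"
  proof -
    have a1: "Acf n k = (-1)^(n+k) * of_nat ((n + k) choose (2*k))" by (simp add: Acf_def)
    have e: "n - 1 + k = n + k - 1" using assms by simp
    have s: "(-1::complex)^(n + k - 1) = - ((-1)^(n+k))" unfolding m by simp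
    have a2: "Acf (n - 1) k = - ((-1)^(n+k)) * of_nat ((n + k - 1) choose (2*k))"
      unfolding Acf_def e s ..
    show ?thesis unfolding a1 a2 by (simp only: ring_distribs diff_minus_eq_add mult_minus_left)
  qed
  also have "of_nat ((n + k) choose (2*k)) + of_nat ((n + k - 1) choose (2*k))
      = (2 * of_nat n / of_nat (n + k)) * (of_nat ((n + k) choose (2*k)) :: complex)"
  proof -
    define C1 where "C1 = (of_nat ((n + k) choose (2*k)) :: complex)"
    define C2 where "C2 = (of_nat ((n + k - 1) choose (2*k)) :: complex)"
    have "of_nat (n - k) * C1 = of_nat (n + k) * C2" using absC by (simp add: C1_def C2_def)
    then have c2: "C2 = of_nat (n - k) * C1 / of_nat (n + k)" using pos by (simp add: eq_divide_eq mult.commute)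
    have "C1 + C2 = (of_nat (n + k) + of_nat (n - k)) * C1 / of_nat (n + k)"
      unfolding c2 using pos by (simp add: field_simps)
    also have "(of_nat (n + k) + of_nat (n - k) :: complex) = 2 * of_nat n"
      using assms by (simp add: of_nat_diff)
    finally show ?thesis by (simp add: C1_def C2_def)
  qed
  finally show ?thesis unfolding sym by (simp add: power_add mult_ac)
qed

lemma c_coef_comb:
  assumes n: "n \<ge> 1"
  shows "of_nat n * c_coef \<kappa> t n
     = (\<Sum>k\<le>n. Acf n k * b_coef \<kappa> t k) - (\<Sum>k\<le>n - 1. Acf (n - 1) k * b_coef \<kappa> t k)"
proof -
  have b0: "b_coef \<kappa> t 0 = 0" by (simp add: b_coef_def)
  have "(\<Sum>k\<le>n - 1. Acf (n - 1) k * b_coef \<kappa> t k) = (\<Sum>k\<le>n. Acf (n - 1) k * b_coef \<kappa> t k)"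
    by (rule sum.mono_neutral_left) (auto simp: Acf_zero)
  then have "(\<Sum>k\<le>n. Acf n k * b_coef \<kappa> t k) - (\<Sum>k\<le>n - 1. Acf (n - 1) k * b_coef \<kappa> t k)
      = (\<Sum>k\<le>n. (Acf n k - Acf (n - 1) k) * b_coef \<kappa> t k)"
    by (simp add: sum_subtractf algebra_simps)
  also have "\<dots> = (\<Sum>k\<in>{1..n}. (Acf n k - Acf (n - 1) k) * b_coef \<kappa> t k)"
    by (rule sum.mono_neutral_right) (auto simp: b0 Suc_le_eq)
  also have "\<dots> = (\<Sum>k\<in>{1..n}. (-1)^n * ((-1)^k * (2 * of_nat n / of_nat (n + k)) * of_nat ((n + k) choose (n - k)) * b_coef \<kappa> t k))"
  proof (rule sum.cong[OF refl])
    fix k assume k: "k \<in> {1..n}"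
    show "(Acf n k - Acf (n - 1) k) * b_coef \<kappa> t k = (-1)^n * ((-1)^k * (2 * of_nat n / of_nat (n + k)) * of_nat ((n + k) choose (n - k)) * b_coef \<kappa> t k)"
      using k by (simp only: Acf_diff mult.assoc atLeastAtMost_iff)
  qed
  also have "\<dots> = (-1)^n * (\<Sum>k\<in>{1..n}. (-1)^k * (2 * of_nat n / of_nat (n + k)) * of_nat ((n + k) choose (n - k)) * b_coef \<kappa> t k)"
    by (simp only: sum_distrib_left)
  also have "\<dots> = of_nat n * c_coef \<kappa> t n"
    using n unfolding c_coef_def by simp
  finally show ?thesis by simp
qed




lemma one_minus_notin: "norm (u::complex) < 1 \<Longrightarrow> 1 - u \<notin> \<real>\<^sub>\<le>\<^sub>0"
proof -
  assume u: "norm u < 1"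
  have "Re u \<le> norm u" by (rule complex_Re_le_cmod)
  then have "Re (1 - u) > 0" using u by simp
  then show ?thesis by (auto simp: complex_nonpos_Reals_iff)
qed

lemma one_plus_csqrt: "1 + csqrt w \<noteq> 0"
proof -
  have h: "Re (csqrt w) \<ge> 0" by (rule Re_csqrt)
  show ?thesis
  proof
    assume "1 + csqrt w = 0"
    then have "Re (1 + csqrt w) = Re 0" by (rule arg_cong)
    then have "1 + Re (csqrt w) = 0" by (simp only: plus_complex.sel one_complex.sel zero_complex.sel)
    then show False using h by linarith
  qed
qed

lemma setup_lem:
  assumes k: "-1 < \<kappa>" "\<kappa> < 1"
  obtains R where "R > 0" "qf \<kappa> t holomorphic_on ball 1 R" "\<And>z. z \<in> ball 1 R \<Longrightarrow> qf \<kappa> t z \<noteq> 0"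
    "Phi \<kappa> t holomorphic_on ball 1 R" "inj_on (Phi \<kappa> t) (ball 1 R)" "deriv (phi \<kappa> t) 1 = qf \<kappa> t 1"
proof -
  obtain \<delta> where \<delta>: "\<delta> > 0" and P: "\<And>z. z \<in> ball 1 \<delta> \<Longrightarrow> z + 1 \<noteq> 0 \<and> z^2 - (of_real \<kappa>)^2 \<noteq> 0 \<and> 1 + xi2 t z \<noteq> 0
      \<and> qf \<kappa> t z \<noteq> 0 \<and> norm (phi \<kappa> t z) < 1"
    using nbhd[OF k, of t] by blast
  have holq: "qf \<kappa> t holomorphic_on ball 1 \<delta>"
    unfolding qf_def[abs_def] xi2_def
    by (intro holomorphic_intros) (use P in \<open>auto simp: xi2_def\<close>)+
  have phieq: "phi \<kappa> t = (\<lambda>z. (z - 1) * qf \<kappa> t z)" by (rule ext) (rule phi_fact)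
  have holphi: "phi \<kappa> t holomorphic_on ball 1 \<delta>"
    unfolding phieq by (intro holomorphic_intros holq)
  have Phieq: "Phi \<kappa> t = (\<lambda>z. (1 - csqrt (1 - phi \<kappa> t z)) / (1 + csqrt (1 - phi \<kappa> t z)))"
    by (rule ext) (simp add: Phi_def alpha_def)
  have holPhi: "Phi \<kappa> t holomorphic_on ball 1 \<delta>"
    unfolding Phieq
    by (intro holomorphic_intros holphi) (use P one_minus_notin one_plus_csqrt in auto)
  have one: "1 \<in> ball (1::complex) \<delta>" using \<delta> by simp
  have dq: "(qf \<kappa> t has_field_derivative deriv (qf \<kappa> t) 1) (at 1)"
    by (rule holomorphic_derivI[OF holq open_ball one])
  have "((\<lambda>z. (z - 1) * qf \<kappa> t z) has_field_derivative ((1 - 0) * qf \<kappa> t 1 + deriv (qf \<kappa> t) 1 * (1 - 1))) (at 1)"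
    by (rule DERIV_mult[OF DERIV_diff[OF DERIV_ident DERIV_const] dq])
  then have "(phi \<kappa> t has_field_derivative qf \<kappa> t 1) (at 1)" unfolding phieq by simp
  then have dphi: "deriv (phi \<kappa> t) 1 = qf \<kappa> t 1" by (rule DERIV_imp_deriv)
  have "deriv (phi \<kappa> t) 1 \<noteq> 0" using dphi P[OF one] by simp
  then have "\<exists>r. r > 0 \<and> ball (1::complex) r \<subseteq> ball 1 \<delta> \<and> inj_on (phi \<kappa> t) (ball 1 r)"
    by (rule has_complex_derivative_locally_injective[OF holphi one open_ball]) blast
  then obtain r where r: "r > 0" "ball (1::complex) r \<subseteq> ball 1 \<delta>" "inj_on (phi \<kappa> t) (ball 1 r)"
    by blast
  have injPhi: "inj_on (Phi \<kappa> t) (ball 1 r)"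
  proof (rule inj_onI)
    fix x y assume xy: "x \<in> ball 1 r" "y \<in> ball 1 r" "Phi \<kappa> t x = Phi \<kappa> t y"
    then have "phi \<kappa> t x = phi \<kappa> t y" by (simp add: phi_alpha)
    then show "x = y" using inj_onD[OF r(3)] xy by blast
  qed
  show ?thesis
  proof (rule that[OF r(1)])
    show "qf \<kappa> t holomorphic_on ball 1 r" by (rule holomorphic_on_subset[OF holq r(2)])
    show "qf \<kappa> t z \<noteq> 0" if "z \<in> ball 1 r" for z using P r(2) that by blast
    show "Phi \<kappa> t holomorphic_on ball 1 r" by (rule holomorphic_on_subset[OF holPhi r(2)])
  qed (use injPhi dphi in auto)
qed




theorem corollary3p2:
  fixes t \<kappa> :: real
  assumes "t > 0" and "-1 < \<kappa>" and "\<kappa> < 1"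
  shows "Phi \<kappa> t 1 = 0 \<and>
    (\<exists>S r. open S \<and> 1 \<in> S \<and> inj_on (Phi \<kappa> t) S \<and> r > 0 \<and> ball 0 r \<subseteq> Phi \<kappa> t ` S \<and>
       (\<forall>z \<in> ball 0 r.
          (\<lambda>n. c_coef \<kappa> t (Suc n) * z ^ Suc n) sums (the_inv_into S (Phi \<kappa> t) z - 1)))"
proof -
  have k: "-1 < \<kappa>" "\<kappa> < 1" using assms by auto
  obtain R where R: "R > 0" and holq: "qf \<kappa> t holomorphic_on ball 1 R"
    and qnz: "\<And>z. z \<in> ball 1 R \<Longrightarrow> qf \<kappa> t z \<noteq> 0"
    and holF: "Phi \<kappa> t holomorphic_on ball 1 R" and injF: "inj_on (Phi \<kappa> t) (ball 1 R)"
    and dphi: "deriv (phi \<kappa> t) 1 = qf \<kappa> t 1"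
    using setup_lem[OF k, of t] by blast
  define F where "F = Phi \<kappa> t"
  define \<rho> where "\<rho> = R / 2"
  have \<rho>: "0 < \<rho>" "\<rho> < R" using R by (auto simp: \<rho>_def)
  define \<gamma> where "\<gamma> = circlepath (1::complex) \<rho>"
  have phi1: "phi \<kappa> t 1 = 0" by (simp add: phi_fact)
  have F1: "F 1 = 0" by (simp add: F_def Phi_def alpha_def phi1)
  have one: "(1::complex) \<in> ball 1 R" using R by simp
  have Fnz: "F w \<noteq> 0" if "w \<in> ball 1 R" "w \<noteq> 1" for w
    using inj_onD[OF injF _ that(1) one] that F1 by (auto simp: F_def)
  have sphR: "sphere (1::complex) \<rho> \<subseteq> ball 1 R" using \<rho> by auto
  have pimg: "path_image \<gamma> = sphere 1 \<rho>" using \<rho> by (simp add: \<gamma>_def path_image_circlepath_nonneg)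
  have sph1: "w \<noteq> 1" if "w \<in> sphere 1 \<rho>" for w using that \<rho> by auto
  have contF: "continuous_on (ball 1 R) F" using holF by (simp add: F_def holomorphic_on_imp_continuous_on)
  have phieq: "phi \<kappa> t = (\<lambda>z. (z - 1) * qf \<kappa> t z)" by (rule ext) (rule phi_fact)
  have holphi: "phi \<kappa> t holomorphic_on ball 1 R" unfolding phieq by (intro holomorphic_intros holq)
  have contphi: "continuous_on (ball 1 R) (phi \<kappa> t)" by (rule holomorphic_on_imp_continuous_on[OF holphi])
  have phinz: "phi \<kappa> t w \<noteq> 0" if "w \<in> ball 1 R" "w \<noteq> 1" for w
    using qnz[OF that(1)] that(2) by (simp add: phi_fact)
  have J: "contour_integral \<gamma> (\<lambda>w. (4 / phi \<kappa> t w) ^ k) = 2 * pi * \<i> * b_coef \<kappa> t k" for k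
  proof (cases k)
    case 0
    have "((\<lambda>w. 1) has_contour_integral 0) \<gamma>"
      unfolding \<gamma>_def by (rule Cauchy_theorem_disc_simple[of _ 1 R]) (use \<rho> sphR in \<open>auto simp: path_image_circlepath_nonneg\<close>)
    then show ?thesis using 0 by (simp add: contour_integral_unique b_coef_def)
  next
    case (Suc j)
    define f where "f = (\<lambda>w. (1 / qf \<kappa> t w) ^ Suc j)"
    have holf: "f holomorphic_on ball 1 R" unfolding f_def by (intro holomorphic_intros holq) (use qnz in auto)
    have cb: "cball (1::complex) \<rho> \<subseteq> ball 1 R" using \<rho> by auto
    have I: "((\<lambda>u. f u / (u - 1) ^ Suc j) has_contour_integral (2 * pi * \<i> / fact j * (deriv ^^ j) f 1)) \<gamma>"
      unfolding \<gamma>_def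
      by (rule Cauchy_has_contour_integral_higher_derivative_circlepath)
         (use holf cb \<rho> in \<open>auto intro: holomorphic_on_imp_continuous_on holomorphic_on_subset\<close>)
    have ev: "eventually (\<lambda>z. phi_quot \<kappa> t z ^ Suc j = f z) (nhds 1)"
    proof -
      have "eventually (\<lambda>z. z \<in> ball 1 R) (nhds (1::complex))" by (rule eventually_nhds_ball[OF R])
      then show ?thesis
      proof (rule eventually_mono)
        fix z :: complex assume z: "z \<in> ball 1 R"
        show "phi_quot \<kappa> t z ^ Suc j = f z"
        proof (cases "z = 1")
          case True then show ?thesis by (simp add: phi_quot_def f_def dphi)
        next
          case False
          then have "(z - 1) / phi \<kappa> t z = 1 / qf \<kappa> t z" using qnz[OF z] by (simp add: phi_fact)
          then show ?thesis using False by (simp add: phi_quot_def f_def)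
        qed
      qed
    qed
    have hd: "(deriv ^^ j) f 1 = (deriv ^^ j) (\<lambda>z. phi_quot \<kappa> t z ^ Suc j) 1"
      by (rule higher_deriv_cong_ev[OF _ refl]) (use ev in \<open>simp add: eq_commute\<close>)
    have a: "a_coef \<kappa> t (Suc j) = (deriv ^^ j) f 1 / fact (Suc j)"
      by (simp add: a_coef_def hd)
    have eqp: "(4 / phi \<kappa> t u) ^ Suc j = 4 ^ Suc j * (f u / (u - 1) ^ Suc j)" if "u \<in> path_image \<gamma>" for u
    proof -
      have u: "u \<in> ball 1 R" "u \<noteq> 1" using that pimg sphR sph1 by auto
      have "(4 / phi \<kappa> t u) = 4 * ((1 / qf \<kappa> t u) / (u - 1))" using qnz[OF u(1)] u(2) by (simp add: phi_fact)
      then show ?thesis by (simp add: f_def power_mult_distrib power_divide)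
    qed
    have "((\<lambda>u. (4 / phi \<kappa> t u) ^ Suc j) has_contour_integral (4 ^ Suc j * (2 * pi * \<i> / fact j * (deriv ^^ j) f 1))) \<gamma>"
      by (rule has_contour_integral_eq[OF has_contour_integral_lmul[OF I]]) (use eqp in simp)
    moreover have "4 ^ Suc j * (2 * pi * \<i> / fact j * (deriv ^^ j) f 1) = 2 * pi * \<i> * b_coef \<kappa> t (Suc j)"
    proof -
      have f: "(fact (Suc j) :: complex) = of_nat (Suc j) * fact j" by (rule fact_Suc)
      have p: "(2::complex)^(2*Suc j) = 4^Suc j" by (simp add: power_mult)
      have fj: "(fact j :: complex) \<noteq> 0" by simp
      have sj: "(of_nat (Suc j) :: complex) \<noteq> 0" by (metis of_nat_eq_0_iff nat.distinct(1))
      define D where "D = (deriv ^^ j) f 1"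
      have c: "of_nat (Suc j) * (D / (of_nat (Suc j) * fact j)) = D / fact j" using sj by simp
      have "2 * pi * \<i> * (of_nat (Suc j) * 4^Suc j * (D / (of_nat (Suc j) * fact j)))
          = 2 * pi * \<i> * 4^Suc j * (of_nat (Suc j) * (D / (of_nat (Suc j) * fact j)))"
        by (simp only: mult_ac)
      also have "\<dots> = 4 ^ Suc j * (2 * pi * \<i> / fact j * D)" unfolding c by (simp add: mult_ac)
      finally show ?thesis unfolding b_coef_def a f p D_def[symmetric] by simp
    qed
    ultimately show ?thesis using Suc by (simp add: contour_integral_unique)
  qed
  have contF_s: "continuous_on (sphere 1 \<rho>) F" by (rule continuous_on_subset[OF contF sphR])
  have contphi_s: "continuous_on (sphere 1 \<rho>) (phi \<kappa> t)" by (rule continuous_on_subset[OF contphi sphR])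
  have Fnz_s: "F w \<noteq> 0" if "w \<in> sphere 1 \<rho>" for w using Fnz sphR sph1 that by blast
  have phinz_s: "phi \<kappa> t w \<noteq> 0" if "w \<in> sphere 1 \<rho>" for w using phinz sphR sph1 that by blast
  have yint: "(\<lambda>w. (4 / phi \<kappa> t w) ^ k) contour_integrable_on \<gamma>" for k
    unfolding \<gamma>_def
    by (rule contour_integrable_continuous_circlepath, unfold pimg[unfolded \<gamma>_def])
       (intro continuous_intros contphi_s, use phinz_s in auto)
  have Vint: "contour_integral \<gamma> (\<lambda>w. Vp N (4 / phi \<kappa> t w)) = 2 * pi * \<i> * (\<Sum>k\<le>N. Acf N k * b_coef \<kappa> t k)" for N
  proof -
    have "contour_integral \<gamma> (\<lambda>w. Vp N (4 / phi \<kappa> t w)) = (\<Sum>k\<le>N. contour_integral \<gamma> (\<lambda>w. Acf N k * (4 / phi \<kappa> t w) ^ k))"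
      unfolding Vp_def by (rule contour_integral_sum) (auto intro: contour_integrable_lmul yint)
    also have "\<dots> = (\<Sum>k\<le>N. Acf N k * (2 * pi * \<i> * b_coef \<kappa> t k))"
      by (rule sum.cong[OF refl]) (simp add: contour_integral_lmul[OF yint] J)
    finally show ?thesis by (simp add: sum_distrib_left mult_ac)
  qed
  have Fn0: "contour_integral \<gamma> (\<lambda>w. F w ^ n) = 0" for n
  proof -
    have "((\<lambda>w. F w ^ n) has_contour_integral 0) \<gamma>"
      unfolding \<gamma>_def
      by (rule Cauchy_theorem_disc_simple[of _ 1 R])
         (use \<rho> sphR holF in \<open>auto simp: path_image_circlepath_nonneg F_def intro!: holomorphic_intros\<close>)
    then show ?thesis by (rule contour_integral_unique)
  qed
  have K: "contour_integral \<gamma> (\<lambda>w. 1 / F w ^ n) = 2 * pi * \<i> * (of_nat n * c_coef \<kappa> t n)" if n: "n \<ge> 1" for n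
  proof -
    have eq: "1 / F w ^ n = Vp n (4 / phi \<kappa> t w) - Vp (n - 1) (4 / phi \<kappa> t w) - F w ^ n"
      if w: "w \<in> path_image \<gamma>" for w
    proof -
      have ws: "w \<in> sphere 1 \<rho>" using w pimg by simp
      have x0: "F w \<noteq> 0" by (rule Fnz_s[OF ws])
      have x1: "1 + F w \<noteq> 0" unfolding F_def Phi_def by (simp add: one_plus_alpha)
      have "phi \<kappa> t w = 4 * F w / (1 + F w)^2" by (simp add: phi_alpha alpha_inv_def F_def)
      then have y: "4 / phi \<kappa> t w = (1 + F w)^2 / F w" using x0 x1 phinz_s[OF ws] by (simp add: field_simps)
      show ?thesis unfolding y by (rule inv_pow_expand[OF x0 refl n])
    qed
    have cFn: "continuous_on (sphere 1 \<rho>) (\<lambda>w. F w ^ n)" by (intro continuous_intros contF_s)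
    have Fnint: "(\<lambda>w. F w ^ n) contour_integrable_on \<gamma>"
      unfolding \<gamma>_def by (rule contour_integrable_continuous_circlepath) (use cFn pimg \<gamma>_def in simp)
    have Vpint: "(\<lambda>w. Vp N (4 / phi \<kappa> t w)) contour_integrable_on \<gamma>" for N
      unfolding Vp_def by (intro contour_integrable_sum finite_atMost contour_integrable_lmul yint)
    have "contour_integral \<gamma> (\<lambda>w. 1 / F w ^ n)
        = contour_integral \<gamma> (\<lambda>w. Vp n (4 / phi \<kappa> t w) - Vp (n - 1) (4 / phi \<kappa> t w) - F w ^ n)"
      by (rule contour_integral_eq) (rule eq)
    also have "\<dots> = contour_integral \<gamma> (\<lambda>w. Vp n (4 / phi \<kappa> t w) - Vp (n - 1) (4 / phi \<kappa> t w)) - contour_integral \<gamma> (\<lambda>w. F w ^ n)"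
      by (rule contour_integral_diff[OF contour_integrable_diff[OF Vpint Vpint] Fnint])
    also have "contour_integral \<gamma> (\<lambda>w. Vp n (4 / phi \<kappa> t w) - Vp (n - 1) (4 / phi \<kappa> t w))
        = contour_integral \<gamma> (\<lambda>w. Vp n (4 / phi \<kappa> t w)) - contour_integral \<gamma> (\<lambda>w. Vp (n - 1) (4 / phi \<kappa> t w))"
      by (rule contour_integral_diff[OF Vpint Vpint])
    also have "\<dots> - contour_integral \<gamma> (\<lambda>w. F w ^ n) = 2 * pi * \<i> * ((\<Sum>k\<le>n. Acf n k * b_coef \<kappa> t k) - (\<Sum>k\<le>n - 1. Acf (n - 1) k * b_coef \<kappa> t k))"
      unfolding Vint Fn0 by (simp add: algebra_simps)
    also have "\<dots> = 2 * pi * \<i> * (of_nat n * c_coef \<kappa> t n)" by (simp add: c_coef_comb[OF n])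
    finally show ?thesis .
  qed
  have holF': "F holomorphic_on ball 1 R" using holF by (simp add: F_def)
  have injF': "inj_on F (ball 1 R)" using injF by (simp add: F_def)
  define I where "I = (\<lambda>n. contour_integral \<gamma> (\<lambda>w. w * deriv F w / F w ^ Suc n))"
  have Ic: "I n = 2 * pi * \<i> * c_coef \<kappa> t n" if n: "n \<ge> 1" for n
  proof -
    have "I n = contour_integral \<gamma> (\<lambda>w. 1 / F w ^ n) / of_nat n"
      unfolding I_def \<gamma>_def by (rule by_parts[OF holF' injF' \<rho> F1 n])
    also have "\<dots> = 2 * pi * \<i> * c_coef \<kappa> t n" unfolding K[OF n] using n by simp
    finally show ?thesis .
  qed
  have "\<exists>x\<in>sphere 1 \<rho>. \<forall>y\<in>sphere 1 \<rho>. norm (F x) \<le> norm (F y)"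
    by (rule continuous_attains_inf) (use \<rho> in \<open>auto intro!: continuous_intros contF_s\<close>)
  then obtain x0 where x0: "x0 \<in> sphere 1 \<rho>" and x0min: "\<And>y. y \<in> sphere 1 \<rho> \<Longrightarrow> norm (F x0) \<le> norm (F y)"
    by blast
  define m where "m = norm (F x0)"
  have m: "m > 0" using Fnz_s[OF x0] by (simp add: m_def)
  have mF: "m \<le> norm (F y)" if "y \<in> sphere 1 \<rho>" for y using x0min[OF that] by (simp add: m_def)
  define S where "S = ball (1::complex) \<rho>"
  have SR: "S \<subseteq> ball 1 R" using \<rho> by (auto simp: S_def)
  have injS: "inj_on F S" by (rule inj_on_subset[OF injF' SR])
  have openFS: "open (F ` S)"
    by (rule open_mapping_thm3[OF holomorphic_on_subset[OF holF' SR]]) (use injS in \<open>auto simp: S_def\<close>)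
  have "0 \<in> F ` S" using F1 \<rho> by (auto simp: S_def intro!: image_eqI[of 0 F 1])
  then obtain r0 where r0: "r0 > 0" "ball 0 r0 \<subseteq> F ` S" using openFS by (meson openE)
  define r where "r = min r0 m"
  have ser0: "(\<lambda>n. F 1 ^ n * I n) sums (2 * pi * \<i> * 1)"
    unfolding I_def \<gamma>_def by (rule inv_series[OF holF' injF' \<rho> _ m mF]) (use \<rho> F1 m in auto)
  have "(\<lambda>n. F 1 ^ n * I n) = (\<lambda>n. if n = 0 then I n else 0)" by (rule ext) (simp add: F1)
  then have "(\<lambda>n. F 1 ^ n * I n) sums I 0" using sums_single[of 0 I] by simp
  then have I0: "I 0 = 2 * pi * \<i>" using ser0 sums_unique2 by force
  have main: "(\<lambda>n. c_coef \<kappa> t (Suc n) * z ^ Suc n) sums (the_inv_into S F z - 1)" if z: "z \<in> ball 0 r" for z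
  proof -
    have zS: "z \<in> F ` S" using z r0 by (auto simp: r_def)
    define w0 where "w0 = the_inv_into S F z"
    have w0S: "w0 \<in> S" unfolding w0_def by (rule the_inv_into_into[OF injS zS subset_refl])
    have Fw0: "F w0 = z" unfolding w0_def by (rule f_the_inv_into_f[OF injS zS])
    have zm: "norm (F w0) < m" using z Fw0 by (simp add: r_def)
    have ser: "(\<lambda>n. F w0 ^ n * I n) sums (2 * pi * \<i> * w0)"
      unfolding I_def \<gamma>_def by (rule inv_series[OF holF' injF' \<rho> _ m mF zm]) (use w0S in \<open>simp add: S_def\<close>)
    then have "(\<lambda>n. z ^ Suc n * I (Suc n)) sums (2 * pi * \<i> * w0 - I 0)"
      unfolding Fw0 by (subst sums_Suc_iff) simp
    then have "(\<lambda>n. z ^ Suc n * I (Suc n) / (2 * pi * \<i>)) sums ((2 * pi * \<i> * w0 - I 0) / (2 * pi * \<i>))"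
      by (rule sums_divide)
    moreover have "z ^ Suc n * I (Suc n) / (2 * pi * \<i>) = c_coef \<kappa> t (Suc n) * z ^ Suc n" for n
    proof -
      have "z ^ Suc n * I (Suc n) / (2 * pi * \<i>) = (2 * pi * \<i>) * (c_coef \<kappa> t (Suc n) * z ^ Suc n) / (2 * pi * \<i>)"
      proof -
        have Ie: "I (Suc n) = 2 * pi * \<i> * c_coef \<kappa> t (Suc n)" by (rule Ic) simp
        show ?thesis by (simp only: Ie mult_ac)
      qed
      also have "\<dots> = c_coef \<kappa> t (Suc n) * z ^ Suc n" by simp
      finally show ?thesis .
    qed
    moreover have "(2 * pi * \<i> * w0 - I 0) / (2 * pi * \<i>) = w0 - 1"
      unfolding I0 by (simp add: field_simps)
    ultimately show ?thesis by (simp add: w0_def)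
  qed
  show ?thesis
  proof (intro conjI exI[of _ S] exI[of _ r])
    show "Phi \<kappa> t 1 = 0" using F1 by (simp add: F_def)
    show "open S" by (simp add: S_def)
    show "1 \<in> S" using \<rho> by (simp add: S_def)
    show "inj_on (Phi \<kappa> t) S" using injS by (simp add: F_def)
    show "r > 0" using r0 m by (simp add: r_def)
    show "ball 0 r \<subseteq> Phi \<kappa> t ` S" using r0 by (auto simp: r_def F_def)
    show "\<forall>z\<in>ball 0 r. (\<lambda>n. c_coef \<kappa> t (Suc n) * z ^ Suc n) sums (the_inv_into S (Phi \<kappa> t) z - 1)"
      using main by (simp add: F_def)
  qed
qed


end
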